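(* Let $d\ge 2$, $\mu\in\mathbb{S}^{d-1}$, $\kappa\ge 0$, and let $X$ follow the Power Spherical distribution with direction $\mu$ and concentration $\kappa$. With $\alpha=\frac{d-1}{2}+\kappa$, $\beta=\frac{d-1}{2}$ and $N_X(\kappa,d) = 2^{\alpha+\beta}\pi^{\beta}\frac{\Gamma(\alpha)}{\Gamma(\alpha+\beta)}$, the differential entropy of $X$ (with respect to surface measure on $\mathbb{S}^{d-1}$) is $$\operatorname{H}(X) = \log N_X(\kappa,d) - \kappa\big(\log 2 + \psi(\alpha) - \psi(\alpha+\beta)\big).$$
   Context: The Power Spherical distribution with direction $\mu\in\mathbb{S}^{d-1}$ and concentration $\kappa\ge 0$ is the probability distribution on $\mathbb{S}^{d-1}=\{x\in\mathbb{R}^d:\|x\|_2=1\}$ with density (w.r.t. surface measure) proportional to $(1+\mu^\top x)^\kappa$. $\psi(x)=\frac{d}{dx}\log\Gamma(x)$ is the digamma function; differential entropy is $\operatorname{H}(X) = -\mathbb{E}[\log p_X(X)]$. *)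

theory Defs
  imports "HOL-Analysis.Analysis"
begin

text \<open>Surface (area) measure on the unit sphere of a Euclidean space of dimension d,
  defined as the cone measure: sigma(A) = d * lambda({t x | 0 < t < 1, x in A}),
  i.e. the push-forward of d times Lebesgue measure on the punctured open unit ball
  under the radial projection x |-> x / |x|.  This coincides with the
  (d-1)-dimensional Hausdorff measure on the sphere.\<close>
definition sphere_surface :: "('a::euclidean_space) measure" where
  "sphere_surface =
     distr (density (restrict_space lborel (ball 0 1 - {0})) (\<lambda>_. ennreal (real DIM('a))))
           (restrict_space borel (sphere 0 1))
           (\<lambda>x. (1 / norm x) *\<^sub>R x)"

definition ps_unnorm :: "'a::euclidean_space \<Rightarrow> real \<Rightarrow> 'a \<Rightarrow> real" where
  "ps_unnorm mu kappa x = (1 + mu \<bullet> x) powr kappa"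

definition ps_density :: "'a::euclidean_space \<Rightarrow> real \<Rightarrow> 'a \<Rightarrow> real" where
  "ps_density mu kappa x =
     ps_unnorm mu kappa x / (\<integral>y. ps_unnorm mu kappa y \<partial>(sphere_surface :: 'a measure))"

definition diff_entropy :: "'b measure \<Rightarrow> ('b \<Rightarrow> real) \<Rightarrow> real" where
  "diff_entropy M p = - (\<integral>x. p x * ln (p x) \<partial>M)"

end

theory Submission
  imports Defs "HOL-Analysis.Vitali_Covering_Theorem"
begin

lemma invol_image_eq_vimage:
  assumes "\<And>x. H (H x) = x"
  shows "H ` X = H -` X"
  using assms by (auto, metis image_eqI vimageI2)

lemma isometry_image_ball:
  fixes H :: "'a::euclidean_space \<Rightarrow> 'a"
  assumes lin: "linear H" and inv: "\<And>x. H (H x) = x" and nrm: "\<And>x. norm (H x) = norm x"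
  shows "H ` ball c r = ball (H c) r"
proof -
  have "H ` ball c r = H -` ball c r" by (rule invol_image_eq_vimage[OF inv])
  also have "\<dots> = ball (H c) r"
  proof (auto simp: dist_norm)
    fix y assume "norm (c - H y) < r"
    also have "c - H y = H (H c - y)" using lin inv by (simp add: linear_diff)
    finally show "norm (H c - y) < r" using nrm by simp
  next
    fix y assume "norm (H c - y) < r"
    also have "H c - y = H (c - H y)" using lin inv by (simp add: linear_diff)
    finally show "norm (c - H y) < r" using nrm by simp
  qed
  finally show ?thesis .
qed

lemma borel_null_of_negligible:
  fixes N :: "'a::euclidean_space set"
  assumes "N \<in> sets borel" "negligible N"
  shows "N \<in> null_sets lborel"
  using assms by (simp add: negligible_iff_null_sets null_sets_completion_iff)

lemma emeasure_isometry_open: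
  fixes H :: "'a::euclidean_space \<Rightarrow> 'a"
  assumes lin: "linear H" and inv: "\<And>x. H (H x) = x" and nrm: "\<And>x. norm (H x) = norm x"
    and U: "open U"
  shows "emeasure lborel (H ` U) = emeasure lborel U"
proof -
  define K where "K = {p :: 'a \<times> real. 0 < snd p \<and> ball (fst p) (snd p) \<subseteq> U}"
  obtain C where C: "countable C" "C \<subseteq> K"
     and pw: "pairwise (\<lambda>i j. disjnt (ball (fst i) (snd i)) (ball (fst j) (snd j))) C"
     and neg: "negligible(U - (\<Union>i \<in> C. ball (fst i) (snd i)))"
  proof (rule Vitali_covering_theorem_balls[of U K fst snd])
    fix x d assume "x \<in> U" "0 < (d::real)"
    then obtain e where e: "e > 0" "ball x e \<subseteq> U" using U open_contains_ball by blast
    show "\<exists>i. i \<in> K \<and> x \<in> ball (fst i) (snd i) \<and> snd i < d"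
      by (rule exI[of _ "(x, min e (d/2))"]) (use e \<open>0 < d\<close> in \<open>auto simp: K_def\<close>)
  qed blast
  define B where "B = (\<lambda>i. ball (fst i) (snd i :: real) :: 'a set)"
  define N where "N = U - (\<Union>i \<in> C. B i)"
  have Bsub: "\<And>i. i \<in> C \<Longrightarrow> B i \<subseteq> U" using C(2) by (auto simp: K_def B_def)
  have Ueq: "U = (\<Union>i \<in> C. B i) \<union> N" using Bsub by (auto simp: N_def)
  have UNb: "(\<Union>i \<in> C. B i) \<in> sets borel"
    by (intro sets.countable_UN'' C(1)) (auto simp: B_def)
  have Nb: "N \<in> sets borel" unfolding N_def using U UNb by auto
  have Nnull: "N \<in> null_sets lborel"
    by (rule borel_null_of_negligible[OF Nb]) (use neg in \<open>simp add: N_def B_def\<close>)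
  have disj: "disjoint_family_on B C"
    using pw unfolding disjoint_family_on_def pairwise_def disjnt_def B_def by metis
  have meas: "\<And>X. X \<in> sets borel \<Longrightarrow> H -` X \<in> sets borel"
  proof -
    have "H \<in> borel_measurable borel"
      by (intro borel_measurable_continuous_onI linear_continuous_on lin[unfolded linear_conv_bounded_linear])
    then show "\<And>X. X \<in> sets borel \<Longrightarrow> H -` X \<in> sets borel"
      using measurable_sets_borel by blast
  qed
  have imB: "\<And>i. H ` B i = ball (H (fst i)) (snd i)"
    unfolding B_def by (rule isometry_image_ball[OF lin inv nrm])
  have HU: "H ` U = (\<Union>i \<in> C. H ` B i) \<union> H ` N"
    by (subst Ueq) auto
  have HNb: "H ` N \<in> sets borel" using meas[OF Nb] invol_image_eq_vimage[OF inv] by simp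
  have HNneg: "negligible (H ` N)"
  proof (rule negligible_differentiable_image_negligible)
    show "negligible N" using neg by (simp add: N_def B_def)
    show "H differentiable_on N"
      using lin by (simp add: linear_imp_differentiable_on)
  qed simp
  have HNnull: "H ` N \<in> null_sets lborel" by (rule borel_null_of_negligible[OF HNb HNneg])
  have HUNb: "(\<Union>i \<in> C. H ` B i) \<in> sets borel"
    by (intro sets.countable_UN'' C(1)) (auto simp: imB)
  have disj2: "disjoint_family_on (\<lambda>i. H ` B i) C"
  proof -
    have "inj H" using inv by (metis injI)
    then show ?thesis using disj unfolding disjoint_family_on_def
      by (metis image_Int image_empty)
  qed
  have "emeasure lborel (H ` U) = emeasure lborel (\<Union>i \<in> C. H ` B i)"
    unfolding HU by (rule emeasure_Un_null_set[OF _ HNnull]) (use HUNb in simp)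
  also have "\<dots> = (\<integral>\<^sup>+i. emeasure lborel (H ` B i) \<partial>count_space C)"
    by (rule emeasure_UN_countable[OF _ C(1) disj2]) (auto simp: imB)
  also have "\<dots> = (\<integral>\<^sup>+i. emeasure lborel (B i) \<partial>count_space C)"
  proof (intro nn_integral_cong)
    fix i
    show "emeasure lborel (H ` B i) = emeasure lborel (B i)"
    proof (cases "snd i \<ge> 0")
      case True
      then show ?thesis by (simp only: imB) (simp add: B_def emeasure_ball)
    next
      case False
      then have "ball (fst i) (snd i) = {}" by auto
      then show ?thesis unfolding B_def by (metis image_empty)
    qed
  qed
  also have "\<dots> = emeasure lborel (\<Union>i \<in> C. B i)"
    by (rule emeasure_UN_countable[symmetric, OF _ C(1) disj]) (auto simp: B_def)
  also have "\<dots> = emeasure lborel U"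
  proof -
    have "emeasure lborel ((\<Union>i \<in> C. B i) \<union> N) = emeasure lborel (\<Union>i \<in> C. B i)"
      by (rule emeasure_Un_null_set[OF _ Nnull]) (use UNb in simp)
    then show ?thesis using Ueq by simp
  qed
  finally show ?thesis .
qed

lemma lborel_distr_isometry:
  fixes H :: "'a::euclidean_space \<Rightarrow> 'a"
  assumes lin: "linear H" and inv: "\<And>x. H (H x) = x" and nrm: "\<And>x. norm (H x) = norm x"
  shows "distr lborel borel H = lborel"
proof (rule measure_eqI_generator_eq[where E="{S. open S}" and \<Omega>=UNIV and A="\<lambda>i. ball 0 (real (Suc i))"])
  show "Int_stable {S :: 'a set. open S}" by (auto simp: Int_stable_def)
  show "{S :: 'a set. open S} \<subseteq> Pow UNIV" by auto
  show "sets (distr lborel borel H) = sigma_sets UNIV {S. open S}" by (simp add: sets_borel)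
  show "sets (lborel :: 'a measure) = sigma_sets UNIV {S. open S}" by (simp add: sets_borel)
  show "range (\<lambda>i. ball (0::'a) (real (Suc i))) \<subseteq> {S. open S}" by auto
  show "(\<Union>i. ball (0::'a) (real (Suc i))) = UNIV"
  proof (intro set_eqI iffI)
    fix x :: 'a
    have "norm x \<le> real (nat \<lceil>norm x\<rceil>)" by (rule real_nat_ceiling_ge)
    then have "x \<in> ball 0 (real (Suc (nat \<lceil>norm x\<rceil>)))" unfolding mem_ball dist_norm by (simp; linarith)
    then show "x \<in> (\<Union>i. ball (0::'a) (real (Suc i)))" by blast
  qed auto
  have Hm: "H \<in> borel_measurable borel"
    by (intro borel_measurable_continuous_onI linear_continuous_on lin[unfolded linear_conv_bounded_linear])
  fix X :: "'a set" assume "X \<in> {S. open S}"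
  then have X: "open X" by simp
  have "emeasure (distr lborel borel H) X = emeasure lborel (H -` X)"
    using Hm X by (subst emeasure_distr) auto
  also have "H -` X = H ` X" using invol_image_eq_vimage[OF inv] by simp
  also have "emeasure lborel (H ` X) = emeasure lborel X"
    by (rule emeasure_isometry_open[OF lin inv nrm X])
  finally show "emeasure (distr lborel borel H) X = emeasure lborel X" .
next
  fix i show "emeasure (distr lborel borel H) (ball 0 (real (Suc i))) \<noteq> \<infinity>"
  proof -
    have Hm: "H \<in> borel_measurable borel"
      by (intro borel_measurable_continuous_onI linear_continuous_on lin[unfolded linear_conv_bounded_linear])
    have "emeasure (distr lborel borel H) (ball 0 (real (Suc i))) = emeasure lborel (H -` ball 0 (real (Suc i)))"
      using Hm by (subst emeasure_distr) auto
    also have "H -` ball 0 (real (Suc i)) = ball 0 (real (Suc i))"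
      using isometry_image_ball[OF lin inv nrm, of 0 "real (Suc i)"] invol_image_eq_vimage[OF inv]
      using lin linear_0 by fastforce
    finally show ?thesis by (simp add: emeasure_ball)
  qed
qed


lemma householder_exists:
  fixes mu b :: "'a::euclidean_space"
  assumes "norm mu = 1" "norm b = 1"
  shows "\<exists>H. linear H \<and> (\<forall>x. H (H x) = x) \<and> (\<forall>x y. inner (H x) (H y) = inner x y) \<and> H b = mu"
proof (cases "mu = b")
  case True
  then show ?thesis by (intro exI[of _ "\<lambda>x. x"]) (auto simp: linear_id[unfolded id_def])
next
  case False
  define v where "v = mu - b"
  have v0: "v \<noteq> 0" using False by (simp add: v_def)
  have vv: "inner v v \<noteq> 0" using v0 by simp
  define H where "H = (\<lambda>x. x - (2 * inner x v / inner v v) *\<^sub>R v)"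
  have lin: "linear H"
    unfolding H_def by (rule linearI) (simp_all add: inner_add_left add_divide_distrib distrib_left scaleR_add_left algebra_simps)
  have Hv: "inner (H x) v = - inner x v" for x
    using vv unfolding H_def by (simp add: inner_diff_left field_simps)
  have Hdef: "\<And>y. H y = y - (2 * inner y v / inner v v) *\<^sub>R v" by (simp add: H_def)
  have inv: "H (H x) = x" for x
  proof -
    have "H (H x) = H x - (2 * inner (H x) v / inner v v) *\<^sub>R v" by (rule Hdef)
    also have "\<dots> = H x + (2 * inner x v / inner v v) *\<^sub>R v" by (simp add: Hv)
    also have "\<dots> = x" by (simp add: Hdef)
    finally show ?thesis .
  qed
  have inn: "inner (H x) (H y) = inner x y" for x y
    using vv unfolding H_def by (simp add: inner_diff_left inner_diff_right inner_commute field_simps)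
  have mm: "inner mu mu = 1" "inner b b = 1" using assms by (simp_all add: dot_square_norm)
  have bm: "inner b mu \<noteq> 1"
  proof
    assume "inner b mu = 1"
    then have "inner (mu - b) (mu - b) = 0"
      using mm by (simp add: inner_diff_left inner_diff_right inner_commute del: inner_eq_zero_iff)
    then show False using False by simp
  qed
  have vv': "inner v v = 2 - 2 * inner b mu"
    using mm by (simp add: v_def inner_diff_left inner_diff_right inner_commute)
  have bv: "inner b v = inner b mu - 1" using mm by (simp add: v_def inner_diff_right)
  have "H b = b + v"
  proof -
    have "2 * inner b v / inner v v = -1"
      using bm unfolding vv' bv by (simp add: field_simps)
    then show ?thesis unfolding H_def by simp
  qed
  then have "H b = mu" by (simp add: v_def)
  then show ?thesis using lin inv inn by blast
qed

lemma nn_integral_rotate: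
  fixes mu b :: "'a::euclidean_space" and Phi :: "real \<Rightarrow> real \<Rightarrow> ennreal"
  assumes "norm mu = 1" "norm b = 1"
    and Phim[measurable]: "case_prod Phi \<in> borel_measurable borel"
  shows "(\<integral>\<^sup>+x. Phi (inner mu x) (inner x x) \<partial>lborel) = (\<integral>\<^sup>+x. Phi (inner b x) (inner x x) \<partial>lborel)"
proof -
  obtain H where lin: "linear H" and inv: "\<And>x. H (H x) = x"
    and inn: "\<And>x y. inner (H x) (H y) = inner x y" and Hb: "H b = mu"
    using householder_exists[OF assms(1,2)] by blast
  have nrm: "norm (H x) = norm x" for x using inn[of x x] by (simp add: dot_square_norm)
  have Hm: "H \<in> borel_measurable borel"
    by (intro borel_measurable_continuous_onI linear_continuous_on lin[unfolded linear_conv_bounded_linear])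
  have m2: "(\<lambda>x. Phi (inner mu x) (inner x x)) \<in> borel_measurable borel"
  proof -
    have "(\<lambda>x. (inner mu x, inner x x)) \<in> borel_measurable borel"
      by (intro borel_measurable_Pair) simp_all
    from measurable_compose[OF this Phim] show ?thesis by simp
  qed
  have "(\<integral>\<^sup>+x. Phi (inner mu x) (inner x x) \<partial>lborel) =
        (\<integral>\<^sup>+x. Phi (inner mu x) (inner x x) \<partial>distr lborel borel H)"
    by (simp add: lborel_distr_isometry[OF lin inv nrm])
  also have "\<dots> = (\<integral>\<^sup>+x. Phi (inner mu (H x)) (inner (H x) (H x)) \<partial>lborel)"
    by (rule nn_integral_distr) (use Hm m2 in auto)
  also have "\<dots> = (\<integral>\<^sup>+x. Phi (inner b x) (inner x x) \<partial>lborel)"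
    by (simp add: inn Hb[symmetric])
  finally show ?thesis .
qed


lemma inner_sum_basis:
  fixes b :: "'a::euclidean_space"
  assumes b: "b \<in> Basis"
  shows "inner b (\<Sum>i\<in>Basis. g i *\<^sub>R i) = g b"
proof -
  have "inner b (\<Sum>i\<in>Basis. g i *\<^sub>R i) = (\<Sum>i\<in>Basis. g i * inner b i)"
    by (simp add: inner_sum_right)
  also have "\<dots> = (\<Sum>i\<in>Basis. if i = b then g b else 0)"
    by (rule sum.cong) (auto simp: inner_Basis b)
  also have "\<dots> = g b" using b by simp
  finally show ?thesis .
qed

lemma inner_self_sum_basis:
  "inner (\<Sum>i\<in>Basis. g i *\<^sub>R i) (\<Sum>i\<in>Basis. g i *\<^sub>R i :: 'a::euclidean_space) = (\<Sum>i\<in>Basis. (g i)\<^sup>2)"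
proof -
  have "inner (\<Sum>i\<in>Basis. g i *\<^sub>R i) (\<Sum>i\<in>Basis. g i *\<^sub>R i :: 'a) =
        (\<Sum>i\<in>Basis. g i * inner i (\<Sum>i\<in>Basis. g i *\<^sub>R i :: 'a))"
    by (simp add: inner_sum_left)
  also have "\<dots> = (\<Sum>i\<in>Basis. (g i)\<^sup>2)"
    by (rule sum.cong) (auto simp: inner_sum_basis power2_eq_square)
  finally show ?thesis .
qed

lemma nn_integral_basis_split:
  fixes b :: "'a::euclidean_space" and Phi :: "real \<Rightarrow> real \<Rightarrow> ennreal"
  assumes b: "b \<in> Basis" and Phim[measurable]: "case_prod Phi \<in> borel_measurable borel"
  shows "(\<integral>\<^sup>+x. Phi (inner b x) (inner x x) \<partial>lborel) =
         (\<integral>\<^sup>+s. \<integral>\<^sup>+y. Phi s (s\<^sup>2 + (\<Sum>i\<in>Basis-{b}. (y i)\<^sup>2)) \<partial>(Pi\<^sub>M (Basis-{b}) (\<lambda>_. lborel)) \<partial>lborel)"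
proof -
  interpret product_sigma_finite "\<lambda>_. lborel"
    by standard
  define I where "I = Basis - {b :: 'a}"
  let ?T = "\<lambda>f. \<Sum>i\<in>Basis. f i *\<^sub>R i :: 'a"
  have Tm: "?T \<in> measurable (Pi\<^sub>M Basis (\<lambda>_. lborel)) borel" by measurable
  have Fm: "(\<lambda>x. Phi (inner b x) (inner x x)) \<in> borel_measurable borel"
  proof -
    have "(\<lambda>x. (inner b x, inner x x)) \<in> borel_measurable borel"
      by (intro borel_measurable_Pair) simp_all
    from measurable_compose[OF this Phim] show ?thesis by simp
  qed
  have ins: "Basis = insert b I" using b by (auto simp: I_def)
  have bI: "b \<notin> I" "finite I" by (auto simp: I_def)
  have "(\<integral>\<^sup>+x. Phi (inner b x) (inner x x) \<partial>lborel) =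
        (\<integral>\<^sup>+x. Phi (inner b x) (inner x x) \<partial>distr (Pi\<^sub>M Basis (\<lambda>_. lborel)) borel ?T)"
    by (subst lborel_eq[symmetric]) (rule refl)
  also have "\<dots> = (\<integral>\<^sup>+f. Phi (inner b (?T f)) (inner (?T f) (?T f)) \<partial>Pi\<^sub>M Basis (\<lambda>_. lborel))"
    by (rule nn_integral_distr[OF Tm]) (use Fm in simp)
  also have "\<dots> = (\<integral>\<^sup>+f. Phi (f b) (\<Sum>i\<in>Basis. (f i)\<^sup>2) \<partial>Pi\<^sub>M Basis (\<lambda>_. lborel))"
    by (simp add: inner_sum_basis[OF b] inner_self_sum_basis)
  also have "\<dots> = (\<integral>\<^sup>+f. Phi (f b) (\<Sum>i\<in>insert b I. (f i)\<^sup>2) \<partial>Pi\<^sub>M (insert b I) (\<lambda>_. lborel))"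
    by (simp only: ins)
  also have "\<dots> = (\<integral>\<^sup>+s. \<integral>\<^sup>+y. Phi ((y(b := s)) b) (\<Sum>i\<in>insert b I. ((y(b := s)) i)\<^sup>2)
                    \<partial>(Pi\<^sub>M I (\<lambda>_. lborel)) \<partial>lborel)"
  proof (rule product_nn_integral_insert_rev)
    show "(\<lambda>f. Phi (f b) (\<Sum>i\<in>insert b I. (f i)\<^sup>2)) \<in> borel_measurable (Pi\<^sub>M (insert b I) (\<lambda>_. lborel))"
    proof -
      have "(\<lambda>f::'a\<Rightarrow>real. (f b, \<Sum>i\<in>insert b I. (f i)\<^sup>2)) \<in> borel_measurable (Pi\<^sub>M (insert b I) (\<lambda>_. lborel))"
      proof -
        have comp: "\<And>i. i \<in> insert b I \<Longrightarrow> (\<lambda>x::'a\<Rightarrow>real. x i) \<in> borel_measurable (Pi\<^sub>M (insert b I) (\<lambda>_. lborel))"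
          using measurable_component_singleton[of _ "insert b I" "\<lambda>_. lborel"] by simp
        have sq: "(\<lambda>x::'a\<Rightarrow>real. (x i)\<^sup>2) \<in> borel_measurable (Pi\<^sub>M (insert b I) (\<lambda>_. lborel))" if "i \<in> insert b I" for i
          using borel_measurable_power[OF comp[OF that], of 2] by simp
        show ?thesis
          by (intro borel_measurable_Pair borel_measurable_sum comp) (auto intro: sq)
      qed
      from measurable_compose[OF this Phim] show ?thesis by simp
    qed
  qed (use bI in auto)
  also have "\<dots> = (\<integral>\<^sup>+s. \<integral>\<^sup>+y. Phi s (s\<^sup>2 + (\<Sum>i\<in>I. (y i)\<^sup>2)) \<partial>(Pi\<^sub>M I (\<lambda>_. lborel)) \<partial>lborel)"
  proof (intro nn_integral_cong)
    fix s :: real and y :: "'a \<Rightarrow> real"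
    have "(\<Sum>i\<in>insert b I. ((y(b := s)) i)\<^sup>2) = s\<^sup>2 + (\<Sum>i\<in>I. ((y(b := s)) i)\<^sup>2)"
      using bI by (subst sum.insert) auto
    also have "(\<Sum>i\<in>I. ((y(b := s)) i)\<^sup>2) = (\<Sum>i\<in>I. (y i)\<^sup>2)"
      by (rule sum.cong) (use bI in auto)
    finally show "Phi ((y(b := s)) b) (\<Sum>i\<in>insert b I. ((y(b := s)) i)\<^sup>2) =
                  Phi s (s\<^sup>2 + (\<Sum>i\<in>I. (y i)\<^sup>2))" by simp
  qed
  finally show ?thesis unfolding I_def .
qed


lemma sets_borel_atMost: "sets (borel :: real measure) = sigma_sets UNIV (range atMost)"
  by (subst borel_eq_atMost) (rule sets_measure_of, simp)

lemma emeasure_sumsq_le: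
  fixes I :: "'i set" and a :: real
  assumes I: "finite I" "I \<noteq> {}"
  shows "emeasure (Pi\<^sub>M I (\<lambda>_. lborel)) ({y. (\<Sum>i\<in>I. (y i)\<^sup>2) \<le> a} \<inter> space (Pi\<^sub>M I (\<lambda>_. lborel))) =
         (if a > 0 then ennreal (unit_ball_vol (real (card I)) * a powr (real (card I) / 2)) else 0)"
proof (cases "a > 0")
  case True
  have "{y. (\<Sum>i\<in>I. (y i)\<^sup>2) \<le> a} = {y. sqrt (\<Sum>i\<in>I. (y i)\<^sup>2) \<le> sqrt a}"
    by simp
  then have "emeasure (Pi\<^sub>M I (\<lambda>_. lborel)) ({y. (\<Sum>i\<in>I. (y i)\<^sup>2) \<le> a} \<inter> space (Pi\<^sub>M I (\<lambda>_. lborel))) =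
        ennreal (unit_ball_vol (real (card I)) * sqrt a ^ card I)"
    using emeasure_cball_aux[OF I(1), of "sqrt a"] True by simp
  also have "sqrt a ^ card I = a powr (real (card I) / 2)"
  proof -
    have "sqrt a ^ card I = sqrt a powr real (card I)"
      using True by (simp add: powr_realpow)
    also have "\<dots> = a powr (real (card I) / 2)"
      using True by (simp add: powr_half_sqrt[symmetric] powr_powr)
    finally show ?thesis .
  qed
  finally show ?thesis using True by simp
next
  case False
  define P where "P = Pi\<^sub>M I (\<lambda>_. lborel :: real measure)"
  define w where "w = unit_ball_vol (real (card I))"
  have w: "w > 0" by (simp add: w_def)
  have c1: "card I \<ge> 1" using I by (simp add: Suc_le_eq card_gt_0_iff)
  have "emeasure P ({y. (\<Sum>i\<in>I. (y i)\<^sup>2) \<le> a} \<inter> space P) \<le> 0"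
  proof (rule ennreal_le_epsilon)
    fix e :: real assume e: "0 < e"
    define \<epsilon> where "\<epsilon> = min 1 (e / w)"
    have ep: "\<epsilon> > 0" "\<epsilon> \<le> 1" "\<epsilon> \<le> e / w" using e w by (auto simp: \<epsilon>_def)
    have sub: "{y. (\<Sum>i\<in>I. (y i)\<^sup>2) \<le> a} \<inter> space P \<subseteq> {y. sqrt (\<Sum>i\<in>I. (y i)\<^sup>2) \<le> \<epsilon>} \<inter> space P"
    proof (intro subsetI)
      fix y assume "y \<in> {y. (\<Sum>i\<in>I. (y i)\<^sup>2) \<le> a} \<inter> space P"
      then have h: "(\<Sum>i\<in>I. (y i)\<^sup>2) \<le> a" "y \<in> space P" by auto
      moreover have "(\<Sum>i\<in>I. (y i)\<^sup>2) \<ge> 0" by (intro sum_nonneg) auto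
      ultimately have "(\<Sum>i\<in>I. (y i)\<^sup>2) = 0" using False by linarith
      then show "y \<in> {y. sqrt (\<Sum>i\<in>I. (y i)\<^sup>2) \<le> \<epsilon>} \<inter> space P" using ep h by simp
    qed
    have "emeasure P ({y. (\<Sum>i\<in>I. (y i)\<^sup>2) \<le> a} \<inter> space P) \<le> emeasure P ({y. sqrt (\<Sum>i\<in>I. (y i)\<^sup>2) \<le> \<epsilon>} \<inter> space P)"
      by (rule emeasure_mono[OF sub]) (unfold P_def, measurable)
    also have "\<dots> = ennreal (w * \<epsilon> ^ card I)"
      unfolding P_def w_def by (rule emeasure_cball_aux[OF I(1) ep(1)])
    also have "w * \<epsilon> ^ card I \<le> e"
    proof -
      have "\<epsilon> ^ card I \<le> \<epsilon> ^ 1" by (rule power_decreasing) (use c1 ep in auto)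
      then have "w * \<epsilon> ^ card I \<le> w * \<epsilon>" using w by simp
      also have "w * \<epsilon> \<le> e" using ep w by (simp add: field_simps)
      finally show ?thesis .
    qed
    finally show "emeasure P ({y. (\<Sum>i\<in>I. (y i)\<^sup>2) \<le> a} \<inter> space P) \<le> 0 + ennreal e"
      by (simp add: ennreal_leI order_trans)
  qed
  then show ?thesis using False by (simp add: P_def)
qed

lemma distr_sumsq:
  fixes I :: "'i set"
  assumes I: "finite I" "I \<noteq> {}"
  shows "distr (Pi\<^sub>M I (\<lambda>_. lborel)) borel (\<lambda>y. \<Sum>i\<in>I. (y i)\<^sup>2) =
         density lborel (\<lambda>r. ennreal (indicator {0<..} r * (unit_ball_vol (real (card I)) * real (card I) / 2)
                                        * r powr (real (card I) / 2 - 1)))"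
    (is "distr ?P borel ?rho = density lborel ?w")
proof (rule measure_eqI_generator_eq[where E="range atMost" and \<Omega>=UNIV and A="\<lambda>i. {..real i}"])
  define N where "N = real (card I)"
  define w where "w = unit_ball_vol N"
  have N: "N \<ge> 1" using I by (simp add: N_def Suc_le_eq card_gt_0_iff)
  have w: "w > 0" using N by (simp add: w_def)
  have rhom: "?rho \<in> borel_measurable ?P" by measurable
  have L: "emeasure (distr ?P borel ?rho) {..a} = (if a > 0 then ennreal (w * a powr (N / 2)) else 0)" for a
  proof -
    have "emeasure (distr ?P borel ?rho) {..a} = emeasure ?P (?rho -` {..a} \<inter> space ?P)"
      using rhom by (subst emeasure_distr) auto
    also have "?rho -` {..a} = {y. (\<Sum>i\<in>I. (y i)\<^sup>2) \<le> a}" by auto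
    finally show ?thesis using emeasure_sumsq_le[OF I, of a] by (simp add: w_def N_def)
  qed
  have R: "emeasure (density lborel ?w) {..a} = (if a > 0 then ennreal (w * a powr (N / 2)) else 0)" for a
  proof -
    have "emeasure (density lborel ?w) {..a} = (\<integral>\<^sup>+r. ?w r * indicator {..a} r \<partial>lborel)"
      by (subst emeasure_density) auto
    also have "\<dots> = (\<integral>\<^sup>+r. ennreal (indicator {0..a} r * (w * N / 2 * r powr (N / 2 - 1))) \<partial>lborel)"
      by (intro nn_integral_cong) (auto simp: indicator_def w_def N_def)
    also have "\<dots> = (if a > 0 then ennreal (w * a powr (N / 2)) else 0)"
    proof (cases "a > 0")
      case True
      have "((\<lambda>r. w * N / 2 * r powr (N / 2 - 1)) has_integral (w * N / 2 * (a powr (N / 2 - 1 + 1) / (N / 2 - 1 + 1)))) {0..a}"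
        by (intro has_integral_mult_right has_integral_powr_from_0) (use N True in auto)
      also have "w * N / 2 * (a powr (N / 2 - 1 + 1) / (N / 2 - 1 + 1)) = w * a powr (N / 2)"
        using N by simp
      finally have hi: "((\<lambda>r. w * N / 2 * r powr (N / 2 - 1)) has_integral (w * a powr (N / 2))) {0..a}" .
      have "(\<integral>\<^sup>+r. ennreal (indicator {0..a} r * (w * N / 2 * r powr (N / 2 - 1))) \<partial>lborel) = ennreal (w * a powr (N / 2))"
        by (rule nn_integral_has_integral_lebesgue[OF _ hi]) (use w N in auto)
      then show ?thesis using True by simp
    next
      case False
      have z: "ennreal (indicator {0..a} r * (w * N / 2 * r powr (N / 2 - 1))) = 0" for r
      proof (cases "r \<in> {0..a}")
        case True
        then have "r = 0" using False by auto
        then show ?thesis by simp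
      qed simp
      show ?thesis using False by (simp only: z) simp
    qed
    finally show ?thesis .
  qed
  show "Int_stable (range (atMost :: real \<Rightarrow> real set))"
    by (auto simp: Int_stable_def)
  show "range (atMost :: real \<Rightarrow> real set) \<subseteq> Pow UNIV" by auto
  show "sets (distr ?P borel ?rho) = sigma_sets UNIV (range atMost)"
    by (simp add: sets_borel_atMost)
  show "sets (density lborel ?w) = sigma_sets UNIV (range atMost)"
    by (simp add: sets_borel_atMost)
  show "range (\<lambda>i. {..real i}) \<subseteq> range atMost" by auto
  show "(\<Union>i. {..real i}) = UNIV"
    by (auto simp: real_arch_simple)
  show "emeasure (distr ?P borel ?rho) X = emeasure (density lborel ?w) X" if "X \<in> range atMost" for X
    using that L R by auto
  show "emeasure (distr ?P borel ?rho) {..real i} \<noteq> \<infinity>" for i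
    using L[of "real i"] by simp
qed


lemma inner_q:
  fixes g :: "real \<Rightarrow> ennreal" and c e q :: real
  assumes g[measurable]: "g \<in> borel_measurable borel" and q: "0 < q" and c: "c \<ge> 0"
  shows "(\<integral>\<^sup>+s. ennreal (indicator {0<..} (q - s\<^sup>2) * c * (q - s\<^sup>2) powr e) * g (s / sqrt q) \<partial>lborel)
       = ennreal (c * q powr (e + 1/2)) *
         (\<integral>\<^sup>+t. ennreal (indicator {-1<..<1} t * (1 - t\<^sup>2) powr e) * g t \<partial>lborel)"
proof -
  have sq: "sqrt q > 0" using q by simp
  have "(\<integral>\<^sup>+s. ennreal (indicator {0<..} (q - s\<^sup>2) * c * (q - s\<^sup>2) powr e) * g (s / sqrt q) \<partial>lborel)
      = ennreal \<bar>sqrt q\<bar> * (\<integral>\<^sup>+t. ennreal (indicator {0<..} (q - (0 + sqrt q * t)\<^sup>2) * c * (q - (0 + sqrt q * t)\<^sup>2) powr e)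
                                     * g ((0 + sqrt q * t) / sqrt q) \<partial>lborel)"
    by (rule nn_integral_real_affine) (use sq in auto)
  also have "(\<integral>\<^sup>+t. ennreal (indicator {0<..} (q - (0 + sqrt q * t)\<^sup>2) * c * (q - (0 + sqrt q * t)\<^sup>2) powr e)
                                     * g ((0 + sqrt q * t) / sqrt q) \<partial>lborel)
           = (\<integral>\<^sup>+t. ennreal (c * q powr e) * (ennreal (indicator {-1<..<1} t * (1 - t\<^sup>2) powr e) * g t) \<partial>lborel)"
  proof (intro nn_integral_cong)
    fix t :: real
    have e1: "(0 + sqrt q * t)\<^sup>2 = q * t\<^sup>2" using q by (simp add: power_mult_distrib)
    have e2: "(0 + sqrt q * t) / sqrt q = t" using sq by simp
    have e3: "q - q * t\<^sup>2 = q * (1 - t\<^sup>2)" by (simp add: algebra_simps)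
    show "ennreal (indicator {0<..} (q - (0 + sqrt q * t)\<^sup>2) * c * (q - (0 + sqrt q * t)\<^sup>2) powr e)
                                     * g ((0 + sqrt q * t) / sqrt q) =
          ennreal (c * q powr e) * (ennreal (indicator {-1<..<1} t * (1 - t\<^sup>2) powr e) * g t)"
    proof (cases "t \<in> {-1<..<1}")
      case True
      then have t2: "1 - t\<^sup>2 > 0" by (simp add: abs_square_less_1 abs_less_iff)
      then have pos: "q * (1 - t\<^sup>2) > 0" using q by simp
      have "ennreal (indicator {0<..} (q * (1 - t\<^sup>2)) * c * (q * (1 - t\<^sup>2)) powr e)
            = ennreal (c * q powr e) * ennreal (indicator {-1<..<1} t * (1 - t\<^sup>2) powr e)"
        using pos True q t2 c by (simp add: powr_mult ennreal_mult[symmetric] mult_ac)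
      then show ?thesis unfolding e1 e2 e3 by (simp add: mult.assoc)
    next
      case False
      then have "1 \<le> \<bar>t\<bar>" by auto
      then have "1 \<le> \<bar>t\<bar> ^ 2" by (rule one_le_power)
      then have t2: "1 - t\<^sup>2 \<le> 0" by simp
      then have "q * (1 - t\<^sup>2) \<le> 0" using q by (simp add: mult_nonneg_nonpos)
      then show ?thesis unfolding e1 e2 e3 using False by simp
    qed
  qed
  also have "\<dots> = ennreal (c * q powr e) * (\<integral>\<^sup>+t. ennreal (indicator {-1<..<1} t * (1 - t\<^sup>2) powr e) * g t \<partial>lborel)"
    by (rule nn_integral_cmult) measurable
  also have "ennreal \<bar>sqrt q\<bar> * (ennreal (c * q powr e) * (\<integral>\<^sup>+t. ennreal (indicator {-1<..<1} t * (1 - t\<^sup>2) powr e) * g t \<partial>lborel))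
      = ennreal (c * q powr (e + 1/2)) * (\<integral>\<^sup>+t. ennreal (indicator {-1<..<1} t * (1 - t\<^sup>2) powr e) * g t \<partial>lborel)"
  proof -
    have "sqrt q * (c * q powr e) = c * q powr (e + 1/2)"
      using q by (simp add: powr_add powr_half_sqrt)
    then have "ennreal (sqrt q) * ennreal (c * q powr e) = ennreal (c * q powr (e + 1/2))"
      using sq c q by (simp add: ennreal_mult[symmetric])
    then show ?thesis using sq by (simp add: mult.assoc[symmetric])
  qed
  finally show ?thesis .
qed

lemma ball_chain:
  fixes mu :: "'a::euclidean_space" and g :: "real \<Rightarrow> ennreal"
  assumes d: "DIM('a) \<ge> 2" and mu: "norm mu = 1" and g[measurable]: "g \<in> borel_measurable borel"
  defines "n \<equiv> real DIM('a) - 1"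
  shows "(\<integral>\<^sup>+x. indicator {0<..<1} (inner x x) * g (inner mu x / sqrt (inner x x)) \<partial>lborel) =
         ennreal (unit_ball_vol n * n / real DIM('a)) *
         (\<integral>\<^sup>+t. ennreal (indicator {-1<..<1} t * (1 - t\<^sup>2) powr (n/2 - 1)) * g t \<partial>lborel)"
proof -
  define Phi where "Phi = (\<lambda>s q. indicator {0<..<1::real} q * g (s / sqrt q))"
  have Phim[measurable]: "case_prod Phi \<in> borel_measurable borel"
    unfolding Phi_def by (subst borel_prod[symmetric]) measurable
  define K where "K = (\<integral>\<^sup>+t. ennreal (indicator {-1<..<1} t * (1 - t\<^sup>2) powr (n/2 - 1)) * g t \<partial>lborel)"
  define c where "c = unit_ball_vol n * n / 2"
  have n1: "n \<ge> 1" using d by (simp add: n_def)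
  have c0: "c \<ge> 0" using n1 by (simp add: c_def)
  define w where "w = (\<lambda>r. ennreal (indicator {0<..} r * c * r powr (n / 2 - 1)))"
  have wm[measurable]: "w \<in> borel_measurable borel" unfolding w_def by measurable
  obtain b :: 'a where b: "b \<in> Basis" using nonempty_Basis by blast
  define I where "I = Basis - {b}"
  have I: "finite I" "I \<noteq> {}" "real (card I) = n"
  proof -
    show "finite I" by (simp add: I_def)
    have "card I = DIM('a) - 1" using b by (simp add: I_def card_Diff_singleton)
    then show "real (card I) = n" using d by (simp add: n_def)
    then show "I \<noteq> {}" using n1 by auto
  qed
  have "(\<integral>\<^sup>+x. indicator {0<..<1} (inner x x) * g (inner mu x / sqrt (inner x x)) \<partial>lborel)
      = (\<integral>\<^sup>+x. Phi (inner mu x) (inner x x) \<partial>lborel)" by (simp add: Phi_def)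
  also have "\<dots> = (\<integral>\<^sup>+x. Phi (inner b x) (inner x x) \<partial>lborel)"
    by (rule nn_integral_rotate[OF mu _ Phim]) (use b in simp)
  also have "\<dots> = (\<integral>\<^sup>+s. \<integral>\<^sup>+y. Phi s (s\<^sup>2 + (\<Sum>i\<in>I. (y i)\<^sup>2)) \<partial>(Pi\<^sub>M I (\<lambda>_. lborel)) \<partial>lborel)"
    unfolding I_def by (rule nn_integral_basis_split[OF b Phim])
  also have "\<dots> = (\<integral>\<^sup>+s. \<integral>\<^sup>+r. w r * Phi s (s\<^sup>2 + r) \<partial>lborel \<partial>lborel)"
  proof (intro nn_integral_cong)
    fix s :: real
    have rhom: "(\<lambda>y::'a\<Rightarrow>real. \<Sum>i\<in>I. (y i)\<^sup>2) \<in> measurable (Pi\<^sub>M I (\<lambda>_. lborel)) borel" by measurable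
    have "(\<integral>\<^sup>+y. Phi s (s\<^sup>2 + (\<Sum>i\<in>I. (y i)\<^sup>2)) \<partial>(Pi\<^sub>M I (\<lambda>_. lborel)))
        = (\<integral>\<^sup>+r. Phi s (s\<^sup>2 + r) \<partial>distr (Pi\<^sub>M I (\<lambda>_. lborel)) borel (\<lambda>y. \<Sum>i\<in>I. (y i)\<^sup>2))"
      by (rule nn_integral_distr[symmetric, OF rhom]) (unfold Phi_def, measurable)
    also have "\<dots> = (\<integral>\<^sup>+r. Phi s (s\<^sup>2 + r) \<partial>density lborel w)"
      by (simp only: distr_sumsq[OF I(1,2)] I(3) w_def c_def)
    also have "\<dots> = (\<integral>\<^sup>+r. w r * Phi s (s\<^sup>2 + r) \<partial>lborel)"
      by (rule nn_integral_density) (unfold Phi_def, measurable)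
    finally show "(\<integral>\<^sup>+y. Phi s (s\<^sup>2 + (\<Sum>i\<in>I. (y i)\<^sup>2)) \<partial>(Pi\<^sub>M I (\<lambda>_. lborel)))
        = (\<integral>\<^sup>+r. w r * Phi s (s\<^sup>2 + r) \<partial>lborel)" .
  qed
  also have "\<dots> = (\<integral>\<^sup>+s. \<integral>\<^sup>+q. w (q - s\<^sup>2) * Phi s q \<partial>lborel \<partial>lborel)"
  proof (rule nn_integral_cong)
    fix s :: real
    have "(\<integral>\<^sup>+r. w r * Phi s (s\<^sup>2 + r) \<partial>lborel) = ennreal \<bar>1\<bar> * (\<integral>\<^sup>+x. w (- s\<^sup>2 + 1 * x) * Phi s (s\<^sup>2 + (- s\<^sup>2 + 1 * x)) \<partial>lborel)"
      by (rule nn_integral_real_affine) (unfold Phi_def, measurable)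
    then show "(\<integral>\<^sup>+r. w r * Phi s (s\<^sup>2 + r) \<partial>lborel) = (\<integral>\<^sup>+q. w (q - s\<^sup>2) * Phi s q \<partial>lborel)"
      by simp
  qed
  also have "\<dots> = (\<integral>\<^sup>+q. \<integral>\<^sup>+s. w (q - s\<^sup>2) * Phi s q \<partial>lborel \<partial>lborel)"
  proof (rule lborel_pair.Fubini'[symmetric])
    show "(\<lambda>(x, y). w (y - x\<^sup>2) * Phi x y) \<in> borel_measurable (lborel \<Otimes>\<^sub>M lborel)"
      unfolding Phi_def by measurable
  qed
  also have "\<dots> = (\<integral>\<^sup>+q. indicator {0<..<1} q * ennreal (c * q powr (n / 2 - 1 + 1/2)) * K \<partial>lborel)"
  proof (intro nn_integral_cong)
    fix q :: real
    show "(\<integral>\<^sup>+s. w (q - s\<^sup>2) * Phi s q \<partial>lborel) = indicator {0<..<1} q * ennreal (c * q powr (n / 2 - 1 + 1/2)) * K"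
    proof (cases "q \<in> {0<..<1}")
      case True
      then have "(\<integral>\<^sup>+s. w (q - s\<^sup>2) * Phi s q \<partial>lborel) =
          (\<integral>\<^sup>+s. ennreal (indicator {0<..} (q - s\<^sup>2) * c * (q - s\<^sup>2) powr (n / 2 - 1)) * g (s / sqrt q) \<partial>lborel)"
        by (simp add: w_def Phi_def)
      also have "\<dots> = ennreal (c * q powr (n / 2 - 1 + 1/2)) * K"
        unfolding K_def by (rule inner_q[OF g _ c0]) (use True in simp)
      finally show ?thesis using True by simp
    next
      case False
      then show ?thesis by (simp add: Phi_def)
    qed
  qed
  also have "\<dots> = (\<integral>\<^sup>+q. ennreal (indicator {0..1} q * (c * q powr (n / 2 - 1 + 1/2))) * K \<partial>lborel)"
  proof (rule nn_integral_cong_AE)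
    show "AE q in lborel. indicator {0<..<1} q * ennreal (c * q powr (n / 2 - 1 + 1/2)) * K =
                          ennreal (indicator {0..1} q * (c * q powr (n / 2 - 1 + 1/2))) * K"
      using AE_lborel_singleton[of "1::real"]
    proof eventually_elim
      case (elim q)
      then show ?case by (cases "q \<in> {0<..<1}") (auto simp: indicator_def)
    qed
  qed
  also have "\<dots> = (\<integral>\<^sup>+q. ennreal (indicator {0..1} q * (c * q powr (n / 2 - 1 + 1/2))) \<partial>lborel) * K"
    by (rule nn_integral_multc) measurable
  also have "(\<integral>\<^sup>+q. ennreal (indicator {0..1} q * (c * q powr (n / 2 - 1 + 1/2))) \<partial>lborel)
           = ennreal (c * (1 powr (n / 2 - 1 + 1/2 + 1) / (n / 2 - 1 + 1/2 + 1)))"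
  proof (rule nn_integral_has_integral_lebesgue)
    show "((\<lambda>q. c * q powr (n / 2 - 1 + 1/2)) has_integral (c * (1 powr (n / 2 - 1 + 1/2 + 1) / (n / 2 - 1 + 1/2 + 1)))) {0..1}"
      by (intro has_integral_mult_right has_integral_powr_from_0) (use n1 in auto)
  qed (use c0 in auto)
  also have "c * (1 powr (n / 2 - 1 + 1/2 + 1) / (n / 2 - 1 + 1/2 + 1)) = unit_ball_vol n * n / real DIM('a)"
    using n1 by (simp add: c_def n_def field_simps)
  finally show ?thesis unfolding K_def by (simp add: mult.commute)
qed

lemma sphere_nn_integral:
  fixes mu :: "'a::euclidean_space" and g :: "real \<Rightarrow> ennreal"
  assumes g[measurable]: "g \<in> borel_measurable borel"
  shows "(\<integral>\<^sup>+x. g (inner mu x) \<partial>(sphere_surface :: 'a measure)) =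
         ennreal (real DIM('a)) * (\<integral>\<^sup>+x. indicator {0<..<1} (inner x x) * g (inner mu x / sqrt (inner x x)) \<partial>lborel)"
proof -
  define M where "M = density (restrict_space lborel (ball 0 1 - {0::'a})) (\<lambda>_. ennreal (real DIM('a)))"
  define T where "T = (\<lambda>x::'a. (1 / norm x) *\<^sub>R x)"
  have spM: "space M = ball 0 1 - {0}" by (simp add: M_def)
  have Tb: "T \<in> borel_measurable borel" unfolding T_def by measurable
  have TM: "T \<in> measurable M (restrict_space borel (sphere 0 1))"
  proof (rule measurable_restrict_space2)
    show "T \<in> space M \<rightarrow> sphere 0 1" unfolding spM T_def by auto
    have "T \<in> measurable (restrict_space lborel (ball 0 1 - {0})) borel"
      by (rule measurable_restrict_space1) (use Tb in simp)
    then show "T \<in> measurable M borel" unfolding M_def by simp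
  qed
  have gm: "(\<lambda>x. g (inner mu x)) \<in> borel_measurable (restrict_space borel (sphere 0 1))"
    by (rule measurable_restrict_space1) measurable
  have "(\<integral>\<^sup>+x. g (inner mu x) \<partial>(sphere_surface :: 'a measure)) =
        (\<integral>\<^sup>+x. g (inner mu x) \<partial>distr M (restrict_space borel (sphere 0 1)) T)"
    by (simp add: sphere_surface_def M_def T_def)
  also have "\<dots> = (\<integral>\<^sup>+x. g (inner mu (T x)) \<partial>M)"
    by (rule nn_integral_distr[OF TM]) (use gm in simp)
  also have "\<dots> = (\<integral>\<^sup>+x. ennreal (real DIM('a)) * g (inner mu (T x)) \<partial>restrict_space lborel (ball 0 1 - {0}))"
    unfolding M_def by (rule nn_integral_density) (auto intro!: measurable_restrict_space1 simp: T_def)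
  also have "\<dots> = (\<integral>\<^sup>+x. ennreal (real DIM('a)) * g (inner mu (T x)) * indicator (ball 0 1 - {0}) x \<partial>lborel)"
    by (rule nn_integral_restrict_space) simp
  also have "\<dots> = (\<integral>\<^sup>+x. ennreal (real DIM('a)) * (indicator {0<..<1} (inner x x) * g (inner mu x / sqrt (inner x x))) \<partial>lborel)"
  proof (rule nn_integral_cong)
    fix x :: 'a
    show "ennreal (real DIM('a)) * g (inner mu (T x)) * indicator (ball 0 1 - {0}) x =
          ennreal (real DIM('a)) * (indicator {0<..<1} (inner x x) * g (inner mu x / sqrt (inner x x)))"
    proof (cases "x \<in> ball 0 1 - {0}")
      case True
      then have "inner x x \<in> {0<..<1}"
        by (auto simp: dot_square_norm power_less_one_iff)
      moreover have "inner mu (T x) = inner mu x / sqrt (inner x x)"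
        by (simp add: T_def norm_eq_sqrt_inner divide_inverse mult.commute)
      ultimately show ?thesis using True by simp
    next
      case False
      then have "inner x x \<notin> {0<..<1}"
        by (auto simp: dot_square_norm power_less_one_iff)
      then show ?thesis using False by simp
    qed
  qed
  also have "\<dots> = ennreal (real DIM('a)) * (\<integral>\<^sup>+x. indicator {0<..<1} (inner x x) * g (inner mu x / sqrt (inner x x)) \<partial>lborel)"
    by (rule nn_integral_cmult) measurable
  finally show ?thesis .
qed

lemma sphere_core:
  fixes mu :: "'a::euclidean_space" and g :: "real \<Rightarrow> ennreal"
  assumes d: "DIM('a) \<ge> 2" and mu: "norm mu = 1" and g[measurable]: "g \<in> borel_measurable borel"
  shows "(\<integral>\<^sup>+x. g (inner mu x) \<partial>(sphere_surface :: 'a measure)) =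
         ennreal (unit_ball_vol (real DIM('a) - 1) * (real DIM('a) - 1)) *
         (\<integral>\<^sup>+t. ennreal (indicator {-1<..<1} t * (1 - t\<^sup>2) powr ((real DIM('a) - 1)/2 - 1)) * g t \<partial>lborel)"
proof -
  have d0: "real DIM('a) > 0" by simp
  have n1: "real DIM('a) - 1 \<ge> 1" using d by simp
  have "ennreal (real DIM('a)) * ennreal (unit_ball_vol (real DIM('a) - 1) * (real DIM('a) - 1) / real DIM('a))
        = ennreal (unit_ball_vol (real DIM('a) - 1) * (real DIM('a) - 1))"
    using d0 n1 by (simp add: ennreal_mult[symmetric])
  then show ?thesis
    unfolding sphere_nn_integral[OF g] ball_chain[OF d mu g] by (simp add: mult.assoc[symmetric])
qed


lemma deriv_seq:
  fixes f :: "real \<Rightarrow> real"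
  assumes "DERIV f x :> D"
  shows "(\<lambda>k. (f (x + (1/2)^k) - f x) / (1/2)^k) \<longlonglongrightarrow> D"
proof -
  have 1: "((\<lambda>h. (f (x+h) - f x)/h) \<longlongrightarrow> D) (at 0)" using assms DERIV_def by blast
  have 2: "filterlim (\<lambda>k::nat. (1/2::real)^k) (at 0) sequentially"
    unfolding filterlim_at by (auto intro!: LIMSEQ_realpow_zero)
  show ?thesis using filterlim_compose[OF 1 2] by simp
qed

lemma log_quot_lim:
  fixes x :: real
  assumes "x > 0"
  shows "(\<lambda>k. (1 - x powr ((1/2)^k)) / (1/2)^k) \<longlonglongrightarrow> - ln x"
proof -
  have "DERIV (\<lambda>h. exp (h * ln x)) 0 :> exp (0 * ln x) * (1 * ln x)"
    by (intro derivative_eq_intros) auto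
  then have "DERIV (\<lambda>h. exp (h * ln x)) 0 :> ln x" by simp
  from deriv_seq[OF this] have "(\<lambda>k. (exp ((1/2)^k * ln x) - 1) / (1/2)^k) \<longlonglongrightarrow> ln x" by simp
  then have "(\<lambda>k. - ((exp ((1/2)^k * ln x) - 1) / (1/2)^k)) \<longlonglongrightarrow> - ln x"
    by (rule tendsto_minus)
  moreover have "- ((exp ((1/2)^k * ln x) - 1) / (1/2)^k) = (1 - x powr ((1/2)^k)) / (1/2)^k" for k :: nat
    using assms by (simp add: powr_def field_simps)
  ultimately show ?thesis by simp
qed

lemma log_quot_mono:
  fixes x h :: real
  assumes "0 < x" "x \<le> 1" "h > 0"
  shows "(1 - x powr h) / h \<le> (1 - x powr (h/2)) / (h/2)"
proof -
  define y where "y = x powr (h/2)"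
  have y: "0 < y" "y \<le> 1" using assms by (auto simp: y_def powr_le1)
  have "x powr h = y^2" unfolding y_def using assms
    by (simp add: powr_realpow[symmetric] powr_powr)
  then have "(1 - x powr h) / h = (1 - y) * (1 + y) / h" by (simp add: algebra_simps power2_eq_square)
  also have "\<dots> \<le> (1 - y) * 2 / h"
    using y assms by (intro divide_right_mono mult_left_mono) auto
  also have "\<dots> = (1 - x powr (h/2)) / (h/2)" by (simp add: y_def)
  finally show ?thesis .
qed

lemma beta_nn:
  fixes a b :: real
  assumes a: "a > 0" and b: "b > 0"
  shows "(\<integral>\<^sup>+x. ennreal (indicator {0<..<1} x * x powr (a-1) * (1-x) powr (b-1)) \<partial>lborel) = ennreal (Beta a b)"
proof -
  have "(\<integral>\<^sup>+x. ennreal (indicator {0..1} x * (x powr (a-1) * (1-x) powr (b-1))) \<partial>lborel) = ennreal (Beta a b)"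
    by (rule nn_integral_has_integral_lebesgue[OF _ has_integral_Beta_real[OF a b]]) auto
  moreover have "(\<lambda>x. ennreal (indicator {0<..<1} x * x powr (a-1) * (1-x) powr (b-1))) =
     (\<lambda>x. ennreal (indicator {0..1} x * (x powr (a-1) * (1-x) powr (b-1))))"
  proof
    fix x :: real
    show "ennreal (indicator {0<..<1} x * x powr (a-1) * (1-x) powr (b-1)) =
          ennreal (indicator {0..1} x * (x powr (a-1) * (1-x) powr (b-1)))"
      by (cases "x = 0 \<or> x = 1") (auto simp: indicator_def)
  qed
  ultimately show ?thesis by simp
qed

lemma logbeta_nn:
  fixes a b :: real
  assumes a: "a > 0" and b: "b > 0"
  shows "(\<integral>\<^sup>+x. ennreal (indicator {0<..<1} x * x powr (a-1) * (1-x) powr (b-1) * (- ln x)) \<partial>lborel)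
         = ennreal (Beta a b * (Digamma (a+b) - Digamma a))"
proof -
  define h :: "nat \<Rightarrow> real" where "h = (\<lambda>k. (1/2)^k)"
  have h: "h k > 0" for k by (simp add: h_def)
  have hS: "h (Suc k) = h k / 2" for k by (simp add: h_def)
  define F where "F = (\<lambda>k x. ennreal (indicator {0<..<1} x * x powr (a-1) * (1-x) powr (b-1) * ((1 - x powr (h k)) / h k)))"
  define u where "u = (\<lambda>x. ennreal (indicator {0<..<1} x * x powr (a-1) * (1-x) powr (b-1) * (- ln x)))"
  have inc: "incseq F"
  proof (rule incseq_SucI, rule le_funI)
    fix k and x :: real
    show "F k x \<le> F (Suc k) x"
    proof (cases "x \<in> {0<..<1}")
      case True
      then have "(1 - x powr (h k)) / h k \<le> (1 - x powr (h (Suc k))) / h (Suc k)"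
        unfolding hS by (intro log_quot_mono h) auto
      then show ?thesis unfolding F_def using True
        by (intro ennreal_leI mult_left_mono) auto
    qed (simp add: F_def)
  qed
  have Fm: "F k \<in> borel_measurable lborel" for k unfolding F_def by measurable
  have lim: "(\<lambda>k. F k x) \<longlonglongrightarrow> u x" for x
  proof (cases "x \<in> {0<..<1}")
    case True
    have "(\<lambda>k. (1 - x powr (h k)) / h k) \<longlonglongrightarrow> - ln x"
      unfolding h_def by (rule log_quot_lim) (use True in auto)
    then have "(\<lambda>k. indicator {0<..<1} x * x powr (a-1) * (1-x) powr (b-1) * ((1 - x powr (h k)) / h k))
          \<longlonglongrightarrow> indicator {0<..<1} x * x powr (a-1) * (1-x) powr (b-1) * (- ln x)"
      by (intro tendsto_mult tendsto_const)
    then show ?thesis unfolding F_def u_def by (rule tendsto_ennrealI)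
  qed (simp add: F_def u_def)
  have L1: "(\<lambda>k. integral\<^sup>N lborel (F k)) \<longlonglongrightarrow> integral\<^sup>N lborel u"
    by (rule nn_integral_LIMSEQ[OF inc Fm lim])
  have FI: "integral\<^sup>N lborel (F k) = ennreal ((Beta a b - Beta (a + h k) b) / h k)" for k
  proof -
    have ahk: "a + h k > 0" using a h[of k] by simp
    have "((\<lambda>x. (x powr (a-1) * (1-x) powr (b-1) - x powr (a + h k - 1) * (1-x) powr (b-1)) * (1 / h k))
          has_integral ((Beta a b - Beta (a + h k) b) * (1 / h k))) {0..1}"
      by (intro has_integral_mult_left has_integral_diff has_integral_Beta_real a b ahk)
    also have "?this \<longleftrightarrow> ((\<lambda>x. x powr (a-1) * (1-x) powr (b-1) * ((1 - x powr (h k)) / h k))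
          has_integral ((Beta a b - Beta (a + h k) b) / h k)) {0..1}"
    proof (rule has_integral_cong[THEN trans])
      fix x :: real assume "x \<in> {0..1}"
      show "(x powr (a-1) * (1-x) powr (b-1) - x powr (a + h k - 1) * (1-x) powr (b-1)) * (1 / h k) =
            x powr (a-1) * (1-x) powr (b-1) * ((1 - x powr (h k)) / h k)"
      proof (cases "x = 0")
        case False
        have "a + h k - 1 = (a - 1) + h k" by simp
        then have "x powr (a + h k - 1) = x powr (a - 1) * x powr (h k)"
          by (simp only: powr_add)
        then show ?thesis by (simp add: field_simps)
      qed simp
    qed simp
    finally have hi: "((\<lambda>x. x powr (a-1) * (1-x) powr (b-1) * ((1 - x powr (h k)) / h k))
          has_integral ((Beta a b - Beta (a + h k) b) / h k)) {0..1}" .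
    have nn: "0 \<le> x powr (a-1) * (1-x) powr (b-1) * ((1 - x powr (h k)) / h k)" if "x \<in> {0..1}" for x
    proof -
      have "x powr (h k) \<le> 1" using that h[of k] by (auto intro: powr_le1)
      then show ?thesis using h[of k] that by (intro mult_nonneg_nonneg divide_nonneg_pos) auto
    qed
    have Feq: "F k = (\<lambda>x. ennreal (indicator {0..1} x * (x powr (a-1) * (1-x) powr (b-1) * ((1 - x powr (h k)) / h k))))"
    proof
      fix x :: real
      show "F k x = ennreal (indicator {0..1} x * (x powr (a-1) * (1-x) powr (b-1) * ((1 - x powr (h k)) / h k)))"
        unfolding F_def by (cases "x = 0 \<or> x = 1") (auto simp: indicator_def)
    qed
    show ?thesis unfolding Feq
      by (rule nn_integral_has_integral_lebesgue[OF nn hi])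
  qed
  have "(\<lambda>k. (Beta (a + h k) b - Beta a b) / h k) \<longlonglongrightarrow> Beta a b * (Digamma a - Digamma (a + b))"
    unfolding h_def
    by (rule deriv_seq, rule has_field_derivative_Beta1) (use a b in auto)
  then have "(\<lambda>k. - ((Beta (a + h k) b - Beta a b) / h k)) \<longlonglongrightarrow> - (Beta a b * (Digamma a - Digamma (a + b)))"
    by (rule tendsto_minus)
  moreover have "(\<lambda>k. - ((Beta (a + h k) b - Beta a b) / h k)) = (\<lambda>k. (Beta a b - Beta (a + h k) b) / h k)"
    by (rule ext) (metis minus_diff_eq minus_divide_left)
  moreover have "- (Beta a b * (Digamma a - Digamma (a + b))) = Beta a b * (Digamma (a + b) - Digamma a)"
    by (simp add: algebra_simps)
  ultimately have "(\<lambda>k. (Beta a b - Beta (a + h k) b) / h k) \<longlonglongrightarrow> Beta a b * (Digamma (a + b) - Digamma a)"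
    by simp
  then have L2: "(\<lambda>k. integral\<^sup>N lborel (F k)) \<longlonglongrightarrow> ennreal (Beta a b * (Digamma (a + b) - Digamma a))"
    unfolding FI by (rule tendsto_ennrealI)
  from LIMSEQ_unique[OF L1 L2] show ?thesis by (simp add: u_def)
qed

lemma subst_identity:
  fixes x \<beta> \<kappa> hx :: real
  assumes x: "0 < x" "x < 1"
  shows "2 * ((1 - (-1 + 2 * x)\<^sup>2) powr (\<beta> - 1) * ((1 + (-1 + 2 * x)) powr \<kappa> * hx)) =
         2 powr (2 * \<beta> + \<kappa> - 1) * (x powr (\<beta> + \<kappa> - 1) * (1 - x) powr (\<beta> - 1) * hx)"
proof -
  have e1: "1 - (-1 + 2 * x)\<^sup>2 = 4 * (x * (1 - x))" by (simp add: power2_eq_square algebra_simps)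
  have e2: "1 + (-1 + 2 * x) = 2 * x" by simp
  have p1: "(4 * (x * (1 - x))) powr (\<beta> - 1) = 4 powr (\<beta> - 1) * (x powr (\<beta> - 1) * (1 - x) powr (\<beta> - 1))"
    using x by (simp add: powr_mult)
  have p2: "(2 * x) powr \<kappa> = 2 powr \<kappa> * x powr \<kappa>" using x by (simp add: powr_mult)
  have p3: "(4::real) powr (\<beta> - 1) = 2 powr (2 * \<beta> - 2)"
  proof -
    have "(4::real) powr (\<beta> - 1) = (2 powr 2) powr (\<beta> - 1)" by simp
    also have "\<dots> = 2 powr (2 * (\<beta> - 1))" by (rule powr_powr)
    also have "2 * (\<beta> - 1) = 2 * \<beta> - 2" by simp
    finally show ?thesis .
  qed
  have p4: "x powr (\<beta> - 1) * x powr \<kappa> = x powr (\<beta> + \<kappa> - 1)"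
    by (simp add: powr_add[symmetric] algebra_simps)
  have p5: "2 * (2 powr (2 * \<beta> - 2) * 2 powr \<kappa>) = (2::real) powr (2 * \<beta> + \<kappa> - 1)"
  proof -
    have "(2::real) powr (2 * \<beta> + \<kappa> - 1) = 2 powr (1 + (2 * \<beta> - 2) + \<kappa>)"
      by (rule arg_cong[where f="\<lambda>e. (2::real) powr e"]) simp
    also have "\<dots> = 2 powr 1 * 2 powr (2 * \<beta> - 2) * 2 powr \<kappa>" by (simp only: powr_add)
    finally show ?thesis by simp
  qed
  show ?thesis
    unfolding e1 e2 p1 p2 p3 p4[symmetric] p5[symmetric] by (simp only: ac_simps)
qed

lemma subst_beta:
  fixes \<beta> \<kappa> :: real and h :: "real \<Rightarrow> real"
  assumes hm[measurable]: "h \<in> borel_measurable borel" and hpos: "\<And>x. 0 < x \<Longrightarrow> x < 1 \<Longrightarrow> h x \<ge> 0"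
  shows "(\<integral>\<^sup>+t. ennreal (indicator {-1<..<1} t * (1 - t\<^sup>2) powr (\<beta> - 1)) * ennreal ((1+t) powr \<kappa> * h ((1+t)/2)) \<partial>lborel)
       = (\<integral>\<^sup>+x. ennreal (2 powr (2 * \<beta> + \<kappa> - 1) * (indicator {0<..<1} x * x powr (\<beta> + \<kappa> - 1) * (1-x) powr (\<beta> - 1) * h x)) \<partial>lborel)"
proof -
  have "(\<integral>\<^sup>+t. ennreal (indicator {-1<..<1} t * (1 - t\<^sup>2) powr (\<beta> - 1)) * ennreal ((1+t) powr \<kappa> * h ((1+t)/2)) \<partial>lborel)
     = ennreal \<bar>2\<bar> * (\<integral>\<^sup>+x. ennreal (indicator {-1<..<1} (-1 + 2 * x) * (1 - (-1 + 2 * x)\<^sup>2) powr (\<beta> - 1)) *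
            ennreal ((1+(-1 + 2 * x)) powr \<kappa> * h ((1+(-1 + 2 * x))/2)) \<partial>lborel)"
    by (rule nn_integral_real_affine) auto
  also have "\<dots> = (\<integral>\<^sup>+x. ennreal 2 * (ennreal (indicator {-1<..<1} (-1 + 2 * x) * (1 - (-1 + 2 * x)\<^sup>2) powr (\<beta> - 1)) *
            ennreal ((1+(-1 + 2 * x)) powr \<kappa> * h ((1+(-1 + 2 * x))/2))) \<partial>lborel)"
    by (subst nn_integral_cmult) auto
  also have "\<dots> = (\<integral>\<^sup>+x. ennreal (2 powr (2 * \<beta> + \<kappa> - 1) * (indicator {0<..<1} x * x powr (\<beta> + \<kappa> - 1) * (1-x) powr (\<beta> - 1) * h x)) \<partial>lborel)"
  proof (rule nn_integral_cong)
    fix x :: real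
    show "ennreal 2 * (ennreal (indicator {-1<..<1} (-1 + 2 * x) * (1 - (-1 + 2 * x)\<^sup>2) powr (\<beta> - 1)) *
            ennreal ((1+(-1 + 2 * x)) powr \<kappa> * h ((1+(-1 + 2 * x))/2))) =
          ennreal (2 powr (2 * \<beta> + \<kappa> - 1) * (indicator {0<..<1} x * x powr (\<beta> + \<kappa> - 1) * (1-x) powr (\<beta> - 1) * h x))"
    proof (cases "x \<in> {0<..<1}")
      case True
      then have x: "0 < x" "x < 1" by auto
      have i1: "indicator {-1<..<1} (-1 + 2 * x) = (1::real)" using x by (simp add: indicator_def)
      have hx: "h x \<ge> 0" using hpos x by simp
      have A: "0 \<le> (1 - (-1 + 2 * x)\<^sup>2) powr (\<beta> - 1)" by simp
      have Bh: "0 \<le> (1 + (-1 + 2 * x)) powr \<kappa> * h x" using hx by simp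
      have hh: "h ((1+(-1 + 2 * x))/2) = h x" by simp
      have "ennreal 2 * (ennreal (indicator {-1<..<1} (-1 + 2 * x) * (1 - (-1 + 2 * x)\<^sup>2) powr (\<beta> - 1)) *
            ennreal ((1+(-1 + 2 * x)) powr \<kappa> * h ((1+(-1 + 2 * x))/2)))
          = ennreal 2 * ennreal ((1 - (-1 + 2 * x)\<^sup>2) powr (\<beta> - 1) * ((1 + (-1 + 2 * x)) powr \<kappa> * h x))"
        unfolding i1 hh using A Bh by (simp only: mult_1 ennreal_mult[symmetric])
      also have "\<dots> = ennreal (2 * ((1 - (-1 + 2 * x)\<^sup>2) powr (\<beta> - 1) * ((1 + (-1 + 2 * x)) powr \<kappa> * h x)))"
        by (rule ennreal_mult'[symmetric]) simp
      also have "\<dots> = ennreal (2 powr (2 * \<beta> + \<kappa> - 1) * (x powr (\<beta> + \<kappa> - 1) * (1 - x) powr (\<beta> - 1) * h x))"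
        by (subst subst_identity[OF x]) (rule refl)
      finally show ?thesis using True by simp
    next
      case False
      then have "indicator {-1<..<1} (-1 + 2 * x) = (0::real)" by (auto simp: indicator_def)
      then show ?thesis using False by simp
    qed
  qed
  finally show ?thesis .
qed


lemma const_identity:
  fixes \<beta> \<kappa> :: real
  assumes b: "\<beta> > 0" and k: "\<kappa> \<ge> 0"
  shows "unit_ball_vol (2 * \<beta>) * (2 * \<beta>) * (2 powr (2 * \<beta> + \<kappa> - 1) * Beta (\<beta> + \<kappa>) \<beta>) =
         2 powr ((\<beta> + \<kappa>) + \<beta>) * pi powr \<beta> * Gamma (\<beta> + \<kappa>) / Gamma ((\<beta> + \<kappa>) + \<beta>)"
proof -
  have G1: "Gamma (\<beta> + 1) = \<beta> * Gamma \<beta>"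
    by (rule Gamma_plus1) (use b in auto)
  have Gp: "Gamma \<beta> > 0" using b by simp
  have p2: "(2::real) * 2 powr (2 * \<beta> + \<kappa> - 1) = 2 powr ((\<beta> + \<kappa>) + \<beta>)"
  proof -
    have "(2::real) powr ((\<beta> + \<kappa>) + \<beta>) = 2 powr (1 + (2 * \<beta> + \<kappa> - 1))"
      by (rule arg_cong[where f="\<lambda>e. (2::real) powr e"]) simp
    also have "\<dots> = 2 powr 1 * 2 powr (2 * \<beta> + \<kappa> - 1)" by (simp only: powr_add)
    finally show ?thesis by simp
  qed
  have "unit_ball_vol (2 * \<beta>) * (2 * \<beta>) * (2 powr (2 * \<beta> + \<kappa> - 1) * Beta (\<beta> + \<kappa>) \<beta>) =
        pi powr \<beta> / (\<beta> * Gamma \<beta>) * (2 * \<beta>) * (2 powr (2 * \<beta> + \<kappa> - 1) * (Gamma (\<beta> + \<kappa>) * Gamma \<beta> / Gamma ((\<beta> + \<kappa>) + \<beta>)))"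
    by (simp add: unit_ball_vol_def Beta_def G1)
  also have "\<dots> = (2 * 2 powr (2 * \<beta> + \<kappa> - 1)) * pi powr \<beta> * Gamma (\<beta> + \<kappa>) / Gamma ((\<beta> + \<kappa>) + \<beta>)"
    using b Gp by (simp add: field_simps less_imp_neq[OF Gp, symmetric])
  also have "\<dots> = 2 powr ((\<beta> + \<kappa>) + \<beta>) * pi powr \<beta> * Gamma (\<beta> + \<kappa>) / Gamma ((\<beta> + \<kappa>) + \<beta>)"
    by (simp only: p2)
  finally show ?thesis .
qed

lemma sphere_beta_general:
  fixes mu :: "'a::euclidean_space" and \<kappa> :: real and h :: "real \<Rightarrow> real"
  assumes d: "DIM('a) \<ge> 2" and mu: "norm mu = 1" and k: "\<kappa> \<ge> 0"
    and hm[measurable]: "h \<in> borel_measurable borel" and hpos: "\<And>x. 0 < x \<Longrightarrow> x < 1 \<Longrightarrow> h x \<ge> 0"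
  defines "\<beta> \<equiv> (real DIM('a) - 1) / 2"
  shows "(\<integral>\<^sup>+x. ennreal ((1 + inner mu x) powr \<kappa> * h ((1 + inner mu x) / 2)) \<partial>(sphere_surface :: 'a measure)) =
         ennreal (unit_ball_vol (2 * \<beta>) * (2 * \<beta>) * 2 powr (2 * \<beta> + \<kappa> - 1)) *
         (\<integral>\<^sup>+x. ennreal (indicator {0<..<1} x * x powr (\<beta> + \<kappa> - 1) * (1-x) powr (\<beta> - 1) * h x) \<partial>lborel)"
proof -
  have g: "(\<lambda>t. ennreal ((1 + t) powr \<kappa> * h ((1 + t) / 2))) \<in> borel_measurable borel" by measurable
  have b2: "real DIM('a) - 1 = 2 * \<beta>" "(real DIM('a) - 1) / 2 - 1 = \<beta> - 1" by (simp_all add: \<beta>_def)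
  have C: "2 powr (2 * \<beta> + \<kappa> - 1) \<ge> (0::real)" by simp
  have "(\<integral>\<^sup>+x. ennreal ((1 + inner mu x) powr \<kappa> * h ((1 + inner mu x) / 2)) \<partial>(sphere_surface :: 'a measure)) =
        ennreal (unit_ball_vol (2 * \<beta>) * (2 * \<beta>)) *
        (\<integral>\<^sup>+t. ennreal (indicator {-1<..<1} t * (1 - t\<^sup>2) powr (\<beta> - 1)) * ennreal ((1 + t) powr \<kappa> * h ((1 + t) / 2)) \<partial>lborel)"
    using sphere_core[OF d mu g] unfolding b2(2) unfolding b2(1) .
  also have "(\<integral>\<^sup>+t. ennreal (indicator {-1<..<1} t * (1 - t\<^sup>2) powr (\<beta> - 1)) * ennreal ((1 + t) powr \<kappa> * h ((1 + t) / 2)) \<partial>lborel)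
      = (\<integral>\<^sup>+x. ennreal (2 powr (2 * \<beta> + \<kappa> - 1) * (indicator {0<..<1} x * x powr (\<beta> + \<kappa> - 1) * (1-x) powr (\<beta> - 1) * h x)) \<partial>lborel)"
    by (rule subst_beta[OF hm hpos])
  also have "\<dots> = (\<integral>\<^sup>+x. ennreal (2 powr (2 * \<beta> + \<kappa> - 1)) * ennreal (indicator {0<..<1} x * x powr (\<beta> + \<kappa> - 1) * (1-x) powr (\<beta> - 1) * h x) \<partial>lborel)"
    by (intro nn_integral_cong ennreal_mult') simp
  also have "\<dots> = ennreal (2 powr (2 * \<beta> + \<kappa> - 1)) * (\<integral>\<^sup>+x. ennreal (indicator {0<..<1} x * x powr (\<beta> + \<kappa> - 1) * (1-x) powr (\<beta> - 1) * h x) \<partial>lborel)"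
    by (rule nn_integral_cmult) measurable
  moreover have A0: "unit_ball_vol (2 * \<beta>) * (2 * \<beta>) \<ge> 0" using d by (simp add: \<beta>_def)
  have eq: "ennreal (unit_ball_vol (2 * \<beta>) * (2 * \<beta>) * 2 powr (2 * \<beta> + \<kappa> - 1)) =
      ennreal (unit_ball_vol (2 * \<beta>) * (2 * \<beta>)) * ennreal (2 powr (2 * \<beta> + \<kappa> - 1))"
    by (rule ennreal_mult'[OF A0])
  ultimately show ?thesis
    unfolding eq by (simp only: mult.assoc)
qed

lemma alg1:
  fixes N F k L :: real
  assumes "N > 0"
  shows "F / N * (k * L - ln N) = 1 / N * ((k * ln 2 - ln N) * F - k * (F * (ln 2 - L)))"
proof -
  have "(k * ln 2 - ln N) * F - k * (F * (ln 2 - L)) = F * (k * L - ln N)" by (simp add: algebra_simps)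
  then show ?thesis by simp
qed

lemma alg2:
  fixes N k D l2 lN :: real
  assumes "N > 0"
  shows "- ((1 / N) * ((k * l2 - lN) * N - k * (N * D))) = lN - k * l2 + k * D"
proof -
  have "(k * l2 - lN) * N - k * (N * D) = N * (k * l2 - lN - k * D)" by (simp add: algebra_simps)
  then show ?thesis using assms by simp
qed

lemma meas_sphere:
  fixes f :: "'a::euclidean_space \<Rightarrow> real"
  assumes "f \<in> borel_measurable borel"
  shows "f \<in> borel_measurable (sphere_surface :: 'a measure)"
proof -
  have s: "sets (sphere_surface :: 'a measure) = sets (restrict_space borel (sphere 0 1))"
    unfolding sphere_surface_def by (rule sets_distr)
  have m: "f \<in> borel_measurable (restrict_space borel (sphere (0::'a) 1))"
    by (rule measurable_restrict_space1) (rule assms)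
  show ?thesis using m unfolding measurable_cong_sets[OF s refl] .
qed

lemma space_sphere_surface: "space (sphere_surface :: 'a::euclidean_space measure) = sphere 0 1"
  unfolding sphere_surface_def space_distr space_restrict_space by simp

theorem theorem15:
  fixes mu :: "'a::euclidean_space" and kappa :: real
  assumes "DIM('a) \<ge> 2"
    and "mu \<in> sphere 0 1"
    and "kappa \<ge> 0"
  shows "let d = real DIM('a);
             \<alpha> = (d - 1) / 2 + kappa;
             \<beta> = (d - 1) / 2;
             N = 2 powr (\<alpha> + \<beta>) * pi powr \<beta> * Gamma \<alpha> / Gamma (\<alpha> + \<beta>)
         in diff_entropy sphere_surface (ps_density mu kappa)
              = ln N - kappa * (ln 2 + Digamma \<alpha> - Digamma (\<alpha> + \<beta>))"
proof -
  note d = assms(1) and k = assms(3)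
  have mu: "norm mu = 1" using assms(2) by simp
  define \<beta> where "\<beta> = (real DIM('a) - 1) / 2"
  define \<alpha> where "\<alpha> = \<beta> + kappa"
  define N where "N = 2 powr (\<alpha> + \<beta>) * pi powr \<beta> * Gamma \<alpha> / Gamma (\<alpha> + \<beta>)"
  define D where "D = Digamma (\<alpha> + \<beta>) - Digamma \<alpha>"
  have b0: "\<beta> > 0" using d by (simp add: \<beta>_def)
  have a0: "\<alpha> > 0" using b0 k by (simp add: \<alpha>_def)
  have N0: "N > 0" using a0 b0 by (simp add: N_def)
  have D0: "D \<ge> 0" unfolding D_def using a0 b0 by (simp add: Digamma_real_mono)
  define f1 where "f1 = (\<lambda>x::'a. (1 + inner mu x) powr kappa)"
  define f2 where "f2 = (\<lambda>x::'a. (1 + inner mu x) powr kappa * (- ln ((1 + inner mu x) / 2)))"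
  have tb: "-1 \<le> inner mu x \<and> inner mu x \<le> 1" if "x \<in> sphere 0 1" for x :: 'a
  proof -
    have "\<bar>inner mu x\<bar> \<le> norm mu * norm x" by (rule Cauchy_Schwarz_ineq2)
    then show ?thesis using that mu by (simp add: abs_le_iff)
  qed
  have f1m: "f1 \<in> borel_measurable sphere_surface" unfolding f1_def by (intro meas_sphere) measurable
  have f2m: "f2 \<in> borel_measurable sphere_surface" unfolding f2_def by (intro meas_sphere) measurable
  have f1p: "f1 x \<ge> 0" for x by (simp add: f1_def)
  have f2p: "f2 x \<ge> 0" if "x \<in> space sphere_surface" for x
  proof -
    have t: "-1 \<le> inner mu x" "inner mu x \<le> 1" using tb that by (auto simp: space_sphere_surface)
    have "- ln ((1 + inner mu x) / 2) \<ge> 0"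
    proof (cases "1 + inner mu x = 0")
      case False
      then have "(1 + inner mu x) / 2 > 0" using t by simp
      then show ?thesis using t by simp
    qed simp
    then show ?thesis unfolding f2_def by (intro mult_nonneg_nonneg) auto
  qed
  have U: "(\<integral>\<^sup>+x. ennreal (f1 x) \<partial>sphere_surface) = ennreal N"
  proof -
    have "(\<integral>\<^sup>+x. ennreal ((1 + inner mu x) powr kappa * (\<lambda>_. 1) ((1 + inner mu x) / 2)) \<partial>(sphere_surface :: 'a measure)) =
         ennreal (unit_ball_vol (2 * \<beta>) * (2 * \<beta>) * 2 powr (2 * \<beta> + kappa - 1)) *
         (\<integral>\<^sup>+x. ennreal (indicator {0<..<1} x * x powr (\<beta> + kappa - 1) * (1-x) powr (\<beta> - 1) * (\<lambda>_. 1) x) \<partial>lborel)"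
    proof -
      have hc: "(\<lambda>_::real. 1::real) \<in> borel_measurable borel" by simp
      have hp: "\<And>x::real. 0 < x \<Longrightarrow> x < 1 \<Longrightarrow> (0::real) \<le> 1" by simp
      show ?thesis unfolding \<beta>_def by (rule sphere_beta_general[OF d mu k hc hp])
    qed
    also have "(\<integral>\<^sup>+x. ennreal (indicator {0<..<1} x * x powr (\<beta> + kappa - 1) * (1-x) powr (\<beta> - 1) * (\<lambda>_. 1) x) \<partial>lborel)
             = ennreal (Beta (\<beta> + kappa) \<beta>)"
      using beta_nn[of "\<beta> + kappa" \<beta>] a0 b0 by (simp add: \<alpha>_def)
    also have "ennreal (unit_ball_vol (2 * \<beta>) * (2 * \<beta>) * 2 powr (2 * \<beta> + kappa - 1)) * ennreal (Beta (\<beta> + kappa) \<beta>)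
             = ennreal N"
    proof -
      have "unit_ball_vol (2 * \<beta>) * (2 * \<beta>) * 2 powr (2 * \<beta> + kappa - 1) \<ge> 0" using b0 by simp
      then have "ennreal (unit_ball_vol (2 * \<beta>) * (2 * \<beta>) * 2 powr (2 * \<beta> + kappa - 1)) * ennreal (Beta (\<beta> + kappa) \<beta>)
          = ennreal (unit_ball_vol (2 * \<beta>) * (2 * \<beta>) * (2 powr (2 * \<beta> + kappa - 1) * Beta (\<beta> + kappa) \<beta>))"
        by (simp add: ennreal_mult'[symmetric] mult.assoc)
      also have "\<dots> = ennreal N"
        unfolding const_identity[OF b0 k] N_def \<alpha>_def ..
      finally show ?thesis .
    qed
    finally show ?thesis by (simp add: f1_def)
  qed
  have V: "(\<integral>\<^sup>+x. ennreal (f2 x) \<partial>sphere_surface) = ennreal (N * D)"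
  proof -
    have "(\<integral>\<^sup>+x. ennreal ((1 + inner mu x) powr kappa * (\<lambda>y. - ln y) ((1 + inner mu x) / 2)) \<partial>(sphere_surface :: 'a measure)) =
         ennreal (unit_ball_vol (2 * \<beta>) * (2 * \<beta>) * 2 powr (2 * \<beta> + kappa - 1)) *
         (\<integral>\<^sup>+x. ennreal (indicator {0<..<1} x * x powr (\<beta> + kappa - 1) * (1-x) powr (\<beta> - 1) * (\<lambda>y. - ln y) x) \<partial>lborel)"
    proof -
      have hc: "(\<lambda>y::real. - ln y) \<in> borel_measurable borel" by measurable
      have hp: "\<And>x::real. 0 < x \<Longrightarrow> x < 1 \<Longrightarrow> (0::real) \<le> - ln x" by simp
      show ?thesis unfolding \<beta>_def by (rule sphere_beta_general[OF d mu k hc hp])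
    qed
    also have "(\<integral>\<^sup>+x. ennreal (indicator {0<..<1} x * x powr (\<beta> + kappa - 1) * (1-x) powr (\<beta> - 1) * (\<lambda>y. - ln y) x) \<partial>lborel)
             = ennreal (Beta (\<beta> + kappa) \<beta> * D)"
      using logbeta_nn[of "\<beta> + kappa" \<beta>] a0 b0 by (simp add: \<alpha>_def D_def)
    also have "ennreal (unit_ball_vol (2 * \<beta>) * (2 * \<beta>) * 2 powr (2 * \<beta> + kappa - 1)) * ennreal (Beta (\<beta> + kappa) \<beta> * D)
             = ennreal (N * D)"
    proof -
      have "unit_ball_vol (2 * \<beta>) * (2 * \<beta>) * 2 powr (2 * \<beta> + kappa - 1) \<ge> 0" using b0 by simp
      then have "ennreal (unit_ball_vol (2 * \<beta>) * (2 * \<beta>) * 2 powr (2 * \<beta> + kappa - 1)) * ennreal (Beta (\<beta> + kappa) \<beta> * D)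
          = ennreal (unit_ball_vol (2 * \<beta>) * (2 * \<beta>) * (2 powr (2 * \<beta> + kappa - 1) * Beta (\<beta> + kappa) \<beta>) * D)"
        by (simp add: ennreal_mult'[symmetric] mult.assoc)
      also have "\<dots> = ennreal (N * D)"
        unfolding const_identity[OF b0 k] N_def \<alpha>_def ..
      finally show ?thesis .
    qed
    finally show ?thesis by (simp add: f2_def)
  qed
  have i1: "integrable sphere_surface f1"
    by (rule integrableI_nonneg[OF f1m]) (use U f1p in auto)
  have i2: "integrable sphere_surface f2"
    by (rule integrableI_nonneg[OF f2m]) (use V f2p in \<open>auto intro!: AE_I2\<close>)
  have I1: "(\<integral>x. f1 x \<partial>sphere_surface) = N"
    using integral_eq_nn_integral[OF f1m] U N0 f1p by simp
  have I2: "(\<integral>x. f2 x \<partial>sphere_surface) = N * D"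
  proof -
    have "(\<integral>x. f2 x \<partial>sphere_surface) = enn2real (\<integral>\<^sup>+x. ennreal (f2 x) \<partial>sphere_surface)"
      by (rule integral_eq_nn_integral[OF f2m]) (use f2p in \<open>auto intro!: AE_I2\<close>)
    then show ?thesis using V N0 D0 by simp
  qed
  have Z: "(\<integral>y. ps_unnorm mu kappa y \<partial>(sphere_surface :: 'a measure)) = N"
    using I1 by (simp add: f1_def ps_unnorm_def)
  have pt: "ps_density mu kappa x * ln (ps_density mu kappa x) = (1 / N) * ((kappa * ln 2 - ln N) * f1 x - kappa * f2 x)"
    if "x \<in> space sphere_surface" for x
  proof -
    have t: "-1 \<le> inner mu x" "inner mu x \<le> 1" using tb that by (auto simp: space_sphere_surface)
    have pd: "ps_density mu kappa x = f1 x / N" unfolding ps_density_def Z by (simp add: f1_def ps_unnorm_def)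
    show ?thesis
    proof (cases "1 + inner mu x = 0")
      case True
      then show ?thesis by (simp add: pd f1_def f2_def)
    next
      case False
      then have pos: "1 + inner mu x > 0" using t by simp
      have lnF: "ln (f1 x / N) = kappa * ln (1 + inner mu x) - ln N"
        using pos N0 by (simp add: f1_def ln_div)
      have f2x: "f2 x = f1 x * (ln 2 - ln (1 + inner mu x))"
        using pos by (simp add: f1_def f2_def ln_div algebra_simps)
      show ?thesis unfolding pd f2x lnF by (rule alg1[OF N0])
    qed
  qed
  have "(\<integral>x. ps_density mu kappa x * ln (ps_density mu kappa x) \<partial>sphere_surface)
      = (\<integral>x. (1 / N) * ((kappa * ln 2 - ln N) * f1 x - kappa * f2 x) \<partial>(sphere_surface :: 'a measure))"
    by (rule Bochner_Integration.integral_cong) (auto simp: pt)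
  also have "\<dots> = (1 / N) * (\<integral>x. (kappa * ln 2 - ln N) * f1 x - kappa * f2 x \<partial>(sphere_surface :: 'a measure))"
    by (rule integral_mult_right_zero)
  also have "(\<integral>x. (kappa * ln 2 - ln N) * f1 x - kappa * f2 x \<partial>(sphere_surface :: 'a measure))
      = (\<integral>x. (kappa * ln 2 - ln N) * f1 x \<partial>(sphere_surface :: 'a measure)) - (\<integral>x. kappa * f2 x \<partial>(sphere_surface :: 'a measure))"
    by (rule Bochner_Integration.integral_diff) (auto intro: i1 i2 integrable_mult_right)
  also have "(\<integral>x. (kappa * ln 2 - ln N) * f1 x \<partial>(sphere_surface :: 'a measure)) = (kappa * ln 2 - ln N) * N"
    unfolding integral_mult_right_zero I1 ..
  also have "(\<integral>x. kappa * f2 x \<partial>(sphere_surface :: 'a measure)) = kappa * (N * D)"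
    unfolding integral_mult_right_zero I2 ..
  finally have "diff_entropy sphere_surface (ps_density mu kappa) = - ((1 / N) * ((kappa * ln 2 - ln N) * N - kappa * (N * D)))"
    unfolding diff_entropy_def by (rule arg_cong)
  also have "\<dots> = ln N - kappa * ln 2 + kappa * D" by (rule alg2[OF N0])
  also have "\<dots> = ln N - kappa * (ln 2 + Digamma \<alpha> - Digamma (\<alpha> + \<beta>))"
    by (simp add: D_def algebra_simps)
  finally have main: "diff_entropy sphere_surface (ps_density mu kappa) = ln N - kappa * (ln 2 + Digamma \<alpha> - Digamma (\<alpha> + \<beta>))" .
  show ?thesis unfolding Let_def using main unfolding N_def \<alpha>_def \<beta>_def .
qed


end
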